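(* For integers $n\ge m\ge 2$, $$f(S_m,\overline{K_n})= n+\min_{k}\max\left\{k+\left\lceil\frac{n-1}{k}\right\rceil,\ 2m-3-k\right\},$$ where the minimum is over positive integers $k$.
   Context: All graphs are finite and simple. $S_m=K_{1,m-1}$ is the star with $m$ vertices; $\overline{K_n}$ is the edgeless graph on $n$ vertices. A graph $G$ is $(H_1,H_2)$-full if every vertex of $G$ belongs to an induced subgraph isomorphic to $H_1$ and to an induced subgraph isomorphic to $H_2$; $f(H_1,H_2)$ is the minimum order of an $(H_1,H_2)$-full graph. *)

theory Defs
  imports Complex_Main
begin

definition simple_graph :: "'a set \<Rightarrow> ('a \<Rightarrow> 'a \<Rightarrow> bool) \<Rightarrow> bool" where
  "simple_graph V E \<longleftrightarrow> finite V \<and> (\<forall>x y. E x y \<longrightarrow> x \<in> V \<and> y \<in> V)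
     \<and> (\<forall>x y. E x y \<longrightarrow> E y x) \<and> (\<forall>x. \<not> E x x)"

definition in_induced_copy ::
  "'a set \<Rightarrow> ('a \<Rightarrow> 'a \<Rightarrow> bool) \<Rightarrow> 'b set \<Rightarrow> ('b \<Rightarrow> 'b \<Rightarrow> bool) \<Rightarrow> 'a \<Rightarrow> bool" where
  "in_induced_copy V E W F v \<longleftrightarrow>
     (\<exists>U. U \<subseteq> V \<and> v \<in> U \<and>
        (\<exists>g. bij_betw g W U \<and> (\<forall>x\<in>W. \<forall>y\<in>W. F x y \<longleftrightarrow> E (g x) (g y))))"

text \<open>The star S_m = K_{1,m-1} on vertices {0..<m} with centre 0.\<close>
definition star_V :: "nat \<Rightarrow> nat set" where "star_V m = {0..<m}"
definition star_E :: "nat \<Rightarrow> nat \<Rightarrow> bool" where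
  "star_E x y \<longleftrightarrow> x \<noteq> y \<and> (x = 0 \<or> y = 0)"

definition empty_V :: "nat \<Rightarrow> nat set" where "empty_V n = {0..<n}"
definition empty_E :: "nat \<Rightarrow> nat \<Rightarrow> bool" where "empty_E x y \<longleftrightarrow> False"

definition is_full ::
  "'a set \<Rightarrow> ('a \<Rightarrow> 'a \<Rightarrow> bool) \<Rightarrow> 'b set \<Rightarrow> ('b \<Rightarrow> 'b \<Rightarrow> bool)
     \<Rightarrow> 'c set \<Rightarrow> ('c \<Rightarrow> 'c \<Rightarrow> bool) \<Rightarrow> bool" where
  "is_full V E W1 F1 W2 F2 \<longleftrightarrow> simple_graph V E \<and>
     (\<forall>v\<in>V. in_induced_copy V E W1 F1 v \<and> in_induced_copy V E W2 F2 v)"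

text \<open>Minimum order of a (nonempty) (H1,H2)-full graph; graphs are taken on vertex type nat,
  which loses no generality for finite graphs.\<close>
definition f_full :: "'b set \<Rightarrow> ('b \<Rightarrow> 'b \<Rightarrow> bool) \<Rightarrow> 'c set \<Rightarrow> ('c \<Rightarrow> 'c \<Rightarrow> bool) \<Rightarrow> nat" where
  "f_full W1 F1 W2 F2 = (LEAST N. \<exists>(V::nat set) E. V \<noteq> {} \<and> is_full V E W1 F1 W2 F2 \<and> card V = N)"

end

theory Submission
  imports Defs
begin

definition indep :: "'a set \<Rightarrow> ('a \<Rightarrow> 'a \<Rightarrow> bool) \<Rightarrow> bool" where
  "indep J E \<longleftrightarrow> (\<forall>x\<in>J. \<forall>y\<in>J. \<not> E x y)"

lemma copy_emptyD:
  assumes "in_induced_copy V E (empty_V n) empty_E v"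
  shows "\<exists>J\<subseteq>V. v \<in> J \<and> card J = n \<and> finite J \<and> indep J E"
proof -
  obtain U g where U: "U \<subseteq> V" "v \<in> U" and g: "bij_betw g {0..<n} U"
    and e: "\<forall>x\<in>{0..<n}. \<forall>y\<in>{0..<n}. empty_E x y \<longleftrightarrow> E (g x) (g y)"
    using assms unfolding in_induced_copy_def empty_V_def by blast
  have "card U = n" using bij_betw_same_card[OF g] by simp
  moreover have "finite U" using bij_betw_finite[OF g] by simp
  moreover have "indep U E" unfolding indep_def
  proof (intro ballI)
    fix x y assume "x \<in> U" "y \<in> U"
    then obtain i j where "i \<in> {0..<n}" "j \<in> {0..<n}" "x = g i" "y = g j"
      using g unfolding bij_betw_def by auto
    then show "\<not> E x y" using e unfolding empty_E_def by auto
  qed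
  ultimately show ?thesis using U by blast
qed

lemma copy_emptyI:
  assumes "finite J" "J \<subseteq> V" "v \<in> J" "n \<le> card J" "indep J E" "1 \<le> n"
  shows "in_induced_copy V E (empty_V n) empty_E v"
proof -
  have "n - 1 \<le> card (J - {v})" using assms by (simp add: card_Diff_singleton)
  then obtain T where T: "T \<subseteq> J - {v}" "card T = n - 1" "finite T"
    by (meson obtain_subset_with_card_n)
  let ?U = "insert v T"
  have cU: "card ?U = n" using T assms by (auto simp: card_insert_if)
  have fU: "finite ?U" using T by simp
  obtain h where h: "bij_betw h {0..<card ?U} ?U" using ex_bij_betw_nat_finite[OF fU] by blast
  show ?thesis unfolding in_induced_copy_def empty_V_def
  proof (intro exI conjI)
    show "?U \<subseteq> V" using T assms by auto
    show "v \<in> ?U" by simp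
    show "bij_betw h {0..<n} ?U" using h cU by simp
    show "\<forall>x\<in>{0..<n}. \<forall>y\<in>{0..<n}. empty_E x y = E (h x) (h y)"
    proof (intro ballI)
      fix x y assume "x \<in> {0..<n}" "y \<in> {0..<n}"
      then have "h x \<in> J" "h y \<in> J" using h cU T assms unfolding bij_betw_def by auto
      then show "empty_E x y = E (h x) (h y)" using assms(5) unfolding indep_def empty_E_def by auto
    qed
  qed
qed

lemma copy_starD:
  assumes "in_induced_copy V E (star_V m) star_E v"
  shows "\<exists>c L. c \<in> V \<and> L \<subseteq> V \<and> c \<notin> L \<and> card L = m - 1 \<and> finite L \<and> indep L E
     \<and> (\<forall>l\<in>L. E c l) \<and> (v = c \<or> v \<in> L)"
proof -
  obtain U g where U: "U \<subseteq> V" "v \<in> U" and g: "bij_betw g {0..<m} U"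
    and e: "\<forall>x\<in>{0..<m}. \<forall>y\<in>{0..<m}. star_E x y \<longleftrightarrow> E (g x) (g y)"
    using assms unfolding in_induced_copy_def star_V_def by blast
  have gU: "g ` {0..<m} = U" and ginj: "inj_on g {0..<m}" using g unfolding bij_betw_def by auto
  have m1: "0 < m" using U gU by (cases m) auto
  let ?c = "g 0" and ?L = "g ` {1..<m}"
  have "?c \<in> V" using gU U m1 by auto
  moreover have "?L \<subseteq> V" using gU U by auto
  moreover have "?c \<notin> ?L"
  proof
    assume "?c \<in> ?L"
    then obtain x where x: "x \<in> {1..<m}" "g 0 = g x" by auto
    then have "0 = x" using inj_onD[OF ginj x(2)] m1 by auto
    then show False using x by auto
  qed
  moreover have "card ?L = m - 1" using card_image[OF inj_on_subset[OF ginj]] by auto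
  moreover have "finite ?L" by simp
  moreover have "indep ?L E" unfolding indep_def
  proof (intro ballI)
    fix x y assume "x \<in> ?L" "y \<in> ?L"
    then obtain i j where ij: "i \<in> {1..<m}" "j \<in> {1..<m}" "x = g i" "y = g j" by auto
    then have "star_E i j \<longleftrightarrow> E (g i) (g j)" using e by auto
    then show "\<not> E x y" using ij by (auto simp: star_E_def)
  qed
  moreover have "\<forall>l\<in>?L. E ?c l"
  proof
    fix l assume "l \<in> ?L"
    then obtain j where j: "j \<in> {1..<m}" "l = g j" by auto
    then have "star_E 0 j \<longleftrightarrow> E (g 0) (g j)" using e m1 by auto
    then show "E ?c l" using j by (auto simp: star_E_def)
  qed
  moreover have "v = ?c \<or> v \<in> ?L"
  proof -
    obtain i where "i < m" "v = g i" using U gU by auto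
    then show ?thesis by (cases "i = 0") auto
  qed
  ultimately show ?thesis by blast
qed

lemma copy_starI:
  assumes "c \<in> V" "K \<subseteq> V" "c \<notin> K" "finite K" "m - 1 \<le> card K" "indep K E"
    "\<forall>l\<in>K. E c l" "v = c \<or> v \<in> K" "2 \<le> m" "\<forall>x. \<not> E x x" "\<forall>x y. E x y \<longrightarrow> E y x"
  shows "in_induced_copy V E (star_V m) star_E v"
proof -
  obtain L where L: "L \<subseteq> K" "card L = m - 1" "finite L" "v \<noteq> c \<longrightarrow> v \<in> L"
  proof (cases "v = c")
    case True
    then show ?thesis using that assms obtain_subset_with_card_n[OF assms(5)] by metis
  next
    case False
    then have vK: "v \<in> K" using assms by auto
    have "m - 2 \<le> card (K - {v})" using assms vK by (simp add: card_Diff_singleton)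
    then obtain T where T: "T \<subseteq> K - {v}" "card T = m - 2" "finite T"
      by (meson obtain_subset_with_card_n)
    have "m - 1 \<ge> 1" using assms by auto
    then have "card (insert v T) = m - 1" using T by (auto simp: card_insert_if)
    then show ?thesis using that[of "insert v T"] T vK by auto
  qed
  have cL: "c \<notin> L" using L assms by auto
  obtain h where h: "bij_betw h {0..<m-1} L" using ex_bij_betw_nat_finite[OF L(3)] L(2) by auto
  define g where "g i = (if i = 0 then c else h (i - 1))" for i
  let ?U = "insert c L"
  have gb: "bij_betw g {0..<m} ?U"
  proof -
    have "{0..<m} = insert 0 {1..<m}" using assms by auto
    moreover have "bij_betw g {1..<m} L"
    proof -
      have "bij_betw (\<lambda>i. i - 1) {1..<m} {0..<m-1}"
        by (rule bij_betw_byWitness[where f'="\<lambda>i. i + 1"]) auto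
      then have "bij_betw (h \<circ> (\<lambda>i. i - 1)) {1..<m} L" using bij_betw_trans h by blast
      then show ?thesis by (rule bij_betw_cong[THEN iffD1, rotated]) (auto simp: g_def)
    qed
    moreover have "g 0 = c" by (simp add: g_def)
    ultimately have "bij_betw g ({1..<m} \<union> {0}) (L \<union> {g 0})"
      using cL notIn_Un_bij_betw3[of 0 "{1..<m}" g L] by simp
    moreover have "{1..<m} \<union> {0} = {0..<m}" "L \<union> {g 0} = ?U" using assms by (auto simp: g_def)
    ultimately show ?thesis by simp
  qed
  show ?thesis unfolding in_induced_copy_def star_V_def
  proof (intro exI conjI)
    show "?U \<subseteq> V" using L assms by auto
    show "v \<in> ?U" using L by auto
    show "bij_betw g {0..<m} ?U" by (rule gb)
    show "\<forall>x\<in>{0..<m}. \<forall>y\<in>{0..<m}. star_E x y = E (g x) (g y)"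
    proof (intro ballI)
      fix x y assume x: "x \<in> {0..<m}" and y: "y \<in> {0..<m}"
      have gx: "x \<noteq> 0 \<Longrightarrow> g x \<in> L" using x h unfolding g_def bij_betw_def by auto
      have gy: "y \<noteq> 0 \<Longrightarrow> g y \<in> L" using y h unfolding g_def bij_betw_def by auto
      have ginj: "inj_on g {0..<m}" using gb bij_betw_def by blast
      show "star_E x y = E (g x) (g y)"
      proof (cases "x = y")
        case True then show ?thesis using assms(10) by (simp add: star_E_def)
      next
        case False
        then have "g x \<noteq> g y" using ginj x y by (meson inj_onD)
        show ?thesis
        proof (cases "x = 0 \<or> y = 0")
          case True
          then show ?thesis
          proof
            assume x0: "x = 0"
            then have "y \<noteq> 0" using False by auto
            then show ?thesis using x0 gy L assms(7) by (auto simp: star_E_def g_def)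
          next
            assume y0: "y = 0"
            then have "x \<noteq> 0" using False by auto
            then have "E c (g x)" using gx L assms(7) by auto
            then show ?thesis using y0 \<open>x \<noteq> 0\<close> assms(11) by (auto simp: star_E_def g_def)
          qed
        next
          case nz: False
          then show ?thesis using gx gy L assms(6) False unfolding indep_def star_E_def by auto
        qed
      qed
    qed
  qed
qed


lemma mu_aux: "(a::nat) + 1 = b \<Longrightarrow> l \<le> N \<Longrightarrow> a * (N + 1) + l < b * (N + 1) + l'"
proof -
  assume "a + 1 = b" "l \<le> N"
  then have "b * (N + 1) = a * (N + 1) + N + 1" by (auto simp: algebra_simps)
  then show ?thesis using \<open>l \<le> N\<close> by linarith
qed

lemma star_partition:
  fixes V :: "'a set" and E :: "'a \<Rightarrow> 'a \<Rightarrow> bool"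
  assumes fin: "finite V" and Ein: "\<forall>x y. E x y \<longrightarrow> x \<in> V \<and> y \<in> V"
    and sym: "\<forall>x y. E x y \<longrightarrow> E y x" and irr: "\<forall>x. \<not> E x x"
    and nb: "\<forall>v\<in>V. \<exists>w. E v w" and DV: "D \<subseteq> V" and Ddom: "\<forall>v\<in>V. v \<in> D \<or> (\<exists>d\<in>D. E v d)"
  shows "\<exists>C f. C \<subseteq> V \<and> card C \<le> card D \<and> (\<forall>v\<in>V-C. f v \<in> C \<and> E v (f v))
           \<and> (\<forall>c\<in>C. \<exists>v\<in>V-C. f v = c)"
proof -
  define valid where "valid C f \<longleftrightarrow> C \<subseteq> V \<and> card C \<le> card D \<and> (\<forall>v\<in>V-C. f v \<in> C \<and> E v (f v))"
    for C :: "'a set" and f :: "'a \<Rightarrow> 'a"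
  define lon where "lon C f = {c\<in>C. \<forall>v\<in>V-C. f v \<noteq> c}" for C :: "'a set" and f :: "'a \<Rightarrow> 'a"
  define mu where "mu C f = card C * (card V + 1) + card (lon C f)" for C :: "'a set" and f :: "'a \<Rightarrow> 'a"
  have ex: "\<exists>x C f. valid C f \<and> mu C f = x"
  proof -
    define f0 where "f0 v = (SOME d. d \<in> D \<and> E v d)" for v
    have "valid D f0" unfolding valid_def
    proof (intro conjI ballI)
      fix v assume "v \<in> V - D"
      then have "\<exists>d. d \<in> D \<and> E v d" using Ddom by auto
      then have "f0 v \<in> D \<and> E v (f0 v)" unfolding f0_def by (rule someI_ex)
      then show "f0 v \<in> D" "E v (f0 v)" by auto
    qed (use DV in auto)
    then show ?thesis by blast
  qed
  define x0 where "x0 = (LEAST x. \<exists>C f. valid C f \<and> mu C f = x)"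
  obtain C f where vCf: "valid C f" and mCf: "mu C f = x0"
    using LeastI_ex[OF ex] unfolding x0_def by blast
  have minim: "\<And>C' f'. valid C' f' \<Longrightarrow> mu C f \<le> mu C' f'"
  proof -
    fix C' f' assume "valid C' f'"
    then have "x0 \<le> mu C' f'" unfolding x0_def by (intro Least_le) blast
    then show "mu C f \<le> mu C' f'" using mCf by simp
  qed
  have CV: "C \<subseteq> V" using vCf valid_def by auto
  have finC: "finite C" using CV fin finite_subset by auto
  have lonsub: "\<And>C' f'. C' \<subseteq> V \<Longrightarrow> lon C' f' \<subseteq> V" unfolding lon_def by auto
  have lonC: "\<And>C' f'. C' \<subseteq> V \<Longrightarrow> card (lon C' f') \<le> card V"
    using card_mono[OF fin] lonsub by blast
  have lonfin: "\<And>C' f'. C' \<subseteq> V \<Longrightarrow> finite (lon C' f')"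
    using finite_subset[OF _ fin] lonsub by blast
  have "lon C f = {}"
  proof (rule ccontr)
    assume "lon C f \<noteq> {}"
    then obtain d where dl: "d \<in> lon C f" by blast
    then have dC: "d \<in> C" and dlon: "\<forall>v\<in>V-C. f v \<noteq> d" unfolding lon_def by auto
    obtain w where dw: "E d w" using nb dC CV by auto
    have wV: "w \<in> V" using Ein dw by auto
    have wd: "w \<noteq> d" using irr dw by auto
    show False
    proof (cases "w \<in> C")
      case True
      define C' where "C' = C - {d}"
      define f' where "f' = f(d := w)"
      have v': "valid C' f'" unfolding valid_def
      proof (intro conjI ballI)
        show "C' \<subseteq> V" using CV C'_def by auto
        have "card C \<le> card D" using vCf unfolding valid_def by auto
        then show "card C' \<le> card D" using card_Diff1_le[of C d] by (simp add: C'_def)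
        fix v assume v: "v \<in> V - C'"
        show "f' v \<in> C'" "E v (f' v)"
        proof -
          have "(f' v \<in> C' \<and> E v (f' v))"
          proof (cases "v = d")
            case True then show ?thesis using wd \<open>w \<in> C\<close> dw C'_def f'_def by auto
          next
            case False
            then have "v \<in> V - C" using v C'_def by auto
            then show ?thesis using vCf dlon False C'_def f'_def unfolding valid_def by auto
          qed
          then show "f' v \<in> C'" "E v (f' v)" by auto
        qed
      qed
      have "card C' + 1 = card C" using dC finC C'_def
        using card.remove[OF finC dC] by simp
      moreover have "card (lon C' f') \<le> card V" using lonC[of C' f'] CV C'_def by blast
      ultimately have "mu C' f' < mu C f" unfolding mu_def
        using mu_aux by blast
      then show False using minim[OF v'] by auto
    next
      case False
      then have wVC: "w \<in> V - C" using wV by auto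
      define c' where "c' = f w"
      have c'C: "c' \<in> C" and wc': "E w c'" using vCf wVC c'_def unfolding valid_def by auto
      have c'd: "c' \<noteq> d" using dlon wVC c'_def by auto
      show False
      proof (cases "\<exists>v\<in>V-C. v \<noteq> w \<and> f v = c'")
        case True
        then obtain v0 where v0: "v0 \<in> V - C" "v0 \<noteq> w" "f v0 = c'" by blast
        define f' where "f' = f(w := d)"
        have v': "valid C f'" unfolding valid_def
        proof (intro conjI ballI)
          show "C \<subseteq> V" "card C \<le> card D" using vCf valid_def by auto
          fix v assume v: "v \<in> V - C"
          have "f' v \<in> C \<and> E v (f' v)"
            using v vCf dC dw sym f'_def unfolding valid_def by (cases "v = w") auto
          then show "f' v \<in> C" "E v (f' v)" by auto
        qed
        have sub: "lon C f' \<subseteq> lon C f - {d}"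
        proof
          fix c assume c: "c \<in> lon C f'"
          then have cC: "c \<in> C" and cl: "\<forall>v\<in>V-C. f' v \<noteq> c" unfolding lon_def by auto
          have "f' w = d" using f'_def by simp
          then have "c \<noteq> d" using cl wVC by metis
          moreover have "f' v0 = c'" using f'_def v0 by simp
          then have "c \<noteq> c'" using cl v0(1) by metis
          moreover have "\<forall>v\<in>V-C. f v \<noteq> c"
          proof
            fix v assume "v \<in> V - C"
            then have "f' v \<noteq> c" using cl by blast
            then show "f v \<noteq> c" using \<open>c \<noteq> c'\<close> c'_def f'_def by (cases "v = w") auto
          qed
          ultimately show "c \<in> lon C f - {d}" using cC unfolding lon_def by auto
        qed
        have "card (lon C f') < card (lon C f)"
          by (rule psubset_card_mono) (use lonfin CV sub dl in auto)
        then have "mu C f' < mu C f" unfolding mu_def by auto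
        then show False using minim[OF v'] by auto
      next
        case False
        then have only: "\<forall>v\<in>V-C. f v = c' \<longrightarrow> v = w" by blast
        define C' where "C' = insert w (C - {c', d})"
        define f' where "f' = f(c' := w, d := w)"
        have cardC': "card C' + 1 = card C"
        proof -
          have "card {c', d} \<le> card C" using c'C dC finC by (intro card_mono) auto
          then have "card (C - {c', d}) + 2 = card C"
            using c'C dC c'd finC by (simp add: card_Diff_subset)
          moreover have "card C' = card (C - {c', d}) + 1"
            using \<open>w \<notin> C\<close> finC C'_def by (simp add: card_insert_if)
          ultimately show ?thesis by simp
        qed
        have v': "valid C' f'" unfolding valid_def
        proof (intro conjI ballI)
          show "C' \<subseteq> V" using CV wV C'_def by auto
          show "card C' \<le> card D" using vCf cardC' unfolding valid_def by auto
          fix v assume v: "v \<in> V - C'"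
          have "f' v \<in> C' \<and> E v (f' v)"
          proof (cases "v = c' \<or> v = d")
            case True
            then show ?thesis using wc' sym dw c'd C'_def f'_def by auto
          next
            case False
            then have vVC: "v \<in> V - C" "v \<noteq> w" using v C'_def by auto
            then have "f v \<in> C" "E v (f v)" using vCf unfolding valid_def by auto
            moreover have "f v \<noteq> c'" using only vVC by auto
            moreover have "f v \<noteq> d" using dlon vVC by auto
            ultimately show ?thesis using False C'_def f'_def by auto
          qed
          then show "f' v \<in> C'" "E v (f' v)" by auto
        qed
        have "card (lon C' f') \<le> card V" using lonC v' valid_def by auto
        then have "mu C' f' < mu C f" using cardC' unfolding mu_def
          using mu_aux by blast
        then show False using minim[OF v'] by auto
      qed
    qed
  qed
  then have "\<forall>c\<in>C. \<exists>v\<in>V-C. f v = c" unfolding lon_def by auto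
  then show ?thesis using vCf unfolding valid_def by blast
qed


lemma block_count:
  fixes V :: "'a set" and E :: "'a \<Rightarrow> 'a \<Rightarrow> bool"
  assumes fin: "finite V"
    and CV: "C \<subseteq> V" and Cf: "\<forall>v\<in>V-C. f v \<in> C \<and> E v (f v)" and Cl: "\<forall>c\<in>C. \<exists>v\<in>V-C. f v = c"
    and Jall: "\<forall>v\<in>V. \<exists>J\<subseteq>V. v \<in> J \<and> card J = n \<and> finite J \<and> indep J E"
    and ne: "V \<noteq> {}"
  shows "1 \<le> card C \<and> card C + n \<le> card V \<and> n - 1 \<le> (card C - 1) * (card V - n + 1 - card C)"
proof -
  define blk where "blk v = (if v \<in> C then v else f v)" for v
  define Bl where "Bl c = {v\<in>V. blk v = c}" for c
  have finC: "finite C" using CV fin finite_subset by auto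
  have Bl_fin: "finite (Bl c)" for c using fin unfolding Bl_def by auto
  have Bl_sub: "Bl c \<subseteq> V" for c unfolding Bl_def by auto
  have c_in: "c \<in> C \<Longrightarrow> c \<in> Bl c" for c using CV unfolding Bl_def blk_def by auto
  have leaf: "c \<in> C \<Longrightarrow> v \<in> Bl c \<Longrightarrow> v \<noteq> c \<Longrightarrow> v \<in> V - C \<and> f v = c \<and> E v c" for c v
    using Cf unfolding Bl_def blk_def by (auto split: if_splits)
  have blkC: "v \<in> V \<Longrightarrow> blk v \<in> C \<and> v \<in> Bl (blk v)" for v
    using Cf unfolding Bl_def blk_def by auto
  have has_leaf: "c \<in> C \<Longrightarrow> \<exists>v\<in>Bl c. v \<noteq> c" for c
  proof -
    assume "c \<in> C"
    then obtain v where v: "v \<in> V - C" "f v = c" using Cl by blast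
    then have "v \<in> Bl c" "v \<noteq> c" using \<open>c \<in> C\<close> unfolding Bl_def blk_def by auto
    then show ?thesis by blast
  qed
  have disj: "c \<noteq> c' \<Longrightarrow> Bl c \<inter> Bl c' = {}" for c c' unfolding Bl_def by auto
  have own: "c \<in> C \<Longrightarrow> c \<in> J \<Longrightarrow> indep J E \<Longrightarrow> Bl c \<inter> J = {c}" for c J
  proof -
    assume a: "c \<in> C" "c \<in> J" "indep J E"
    show "Bl c \<inter> J = {c}"
    proof
      show "Bl c \<inter> J \<subseteq> {c}"
      proof
        fix v assume v: "v \<in> Bl c \<inter> J"
        show "v \<in> {c}"
        proof (rule ccontr)
          assume "v \<notin> {c}"
          then have "E v c" using leaf a v by auto
          then show False using a v unfolding indep_def by auto
        qed
      qed
      show "{c} \<subseteq> Bl c \<inter> J" using c_in a by auto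
    qed
  qed
  have out: "c \<in> C \<Longrightarrow> indep J E \<Longrightarrow> \<exists>x\<in>Bl c. x \<notin> J" for c J
  proof -
    assume a: "c \<in> C" "indep J E"
    show ?thesis
    proof (cases "c \<in> J")
      case False then show ?thesis using c_in a by auto
    next
      case True
      obtain v where "v \<in> Bl c" "v \<noteq> c" using has_leaf a by auto
      then show ?thesis using own[OF a(1) True a(2)] by auto
    qed
  qed
  have small: "c \<in> C \<Longrightarrow> indep J E \<Longrightarrow> card (Bl c \<inter> J) + 1 \<le> card (Bl c)" for c J
  proof -
    assume a: "c \<in> C" "indep J E"
    obtain x where "x \<in> Bl c" "x \<notin> J" using out[OF a] by auto
    then have "Bl c \<inter> J \<subset> Bl c" by auto
    then have "card (Bl c \<inter> J) < card (Bl c)" using Bl_fin by (rule psubset_card_mono[rotated])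
    then show ?thesis by simp
  qed
  have two: "c \<in> C \<Longrightarrow> 2 \<le> card (Bl c)" for c
  proof -
    assume a: "c \<in> C"
    obtain v where "v \<in> Bl c" "v \<noteq> c" using has_leaf a by auto
    then have "{c, v} \<subseteq> Bl c" using c_in a by auto
    then have "card {c, v} \<le> card (Bl c)" using Bl_fin by (rule card_mono[rotated])
    then show ?thesis using \<open>v \<noteq> c\<close> by simp
  qed
  have claim1: "card (Bl c) + card C \<le> card V - n + 2" if cC: "c \<in> C" for c
  proof -
    obtain J where J: "J \<subseteq> V" "c \<in> J" "card J = n" "finite J" "indep J E"
      using Jall cC CV by blast
    define h where "h c' = (SOME x. x \<in> Bl c' \<and> x \<notin> J)" for c'
    have h: "c' \<in> C \<Longrightarrow> h c' \<in> Bl c' \<and> h c' \<notin> J" for c'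
    proof -
      assume "c' \<in> C"
      then have "\<exists>x. x \<in> Bl c' \<and> x \<notin> J" using out[OF _ J(5)] by blast
      then show ?thesis unfolding h_def by (rule someI_ex)
    qed
    have inj: "inj_on h (C - {c})"
    proof (rule inj_onI)
      fix x y assume xy: "x \<in> C - {c}" "y \<in> C - {c}" "h x = h y"
      have "h x \<in> Bl x" "h y \<in> Bl y" using h xy(1,2) by auto
      then have "h x \<in> Bl x \<inter> Bl y" using xy(3) by simp
      then show "x = y" using disj by blast
    qed
    have Z: "(Bl c - {c}) \<union> h ` (C - {c}) \<subseteq> V - J"
    proof
      fix z assume z: "z \<in> (Bl c - {c}) \<union> h ` (C - {c})"
      show "z \<in> V - J"
      proof (cases "z \<in> Bl c - {c}")
        case True
        then show ?thesis using own[OF cC J(2) J(5)] Bl_sub by blast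
      next
        case False
        then obtain c' where c': "c' \<in> C - {c}" "z = h c'" using z by blast
        then have "h c' \<in> Bl c'" "h c' \<notin> J" using h by auto
        then show ?thesis using c' Bl_sub by blast
      qed
    qed
    have dZ: "(Bl c - {c}) \<inter> h ` (C - {c}) = {}"
    proof (rule ccontr)
      assume "(Bl c - {c}) \<inter> h ` (C - {c}) \<noteq> {}"
      then obtain c' where c': "c' \<in> C - {c}" "h c' \<in> Bl c" by blast
      then have "h c' \<in> Bl c' \<inter> Bl c" using h by auto
      then show False using disj c' by blast
    qed
    have "card ((Bl c - {c}) \<union> h ` (C - {c})) = card (Bl c - {c}) + card (C - {c})"
      using card_Un_disjoint[OF _ _ dZ] Bl_fin finC card_image[OF inj] by auto
    also have "\<dots> = card (Bl c) - 1 + (card C - 1)"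
      using c_in cC Bl_fin finC by (simp add: card_Diff_singleton)
    finally have "card (Bl c) - 1 + (card C - 1) \<le> card (V - J)"
      using card_mono[OF _ Z] fin by (metis finite_Diff)
    moreover have "card (V - J) = card V - n" using J fin by (simp add: card_Diff_subset)
    moreover have "1 \<le> card C" using cC finC card_0_eq by fastforce
    ultimately show ?thesis using two[OF cC] by linarith
  qed
  obtain v0 where "v0 \<in> V" using ne by auto
  define c0 where "c0 = blk v0"
  have c0C: "c0 \<in> C" using blkC \<open>v0 \<in> V\<close> c0_def by auto
  have C1: "1 \<le> card C" using c0C finC card_0_eq by fastforce
  obtain J0 where J0: "J0 \<subseteq> V" "c0 \<in> J0" "card J0 = n" "finite J0" "indep J0 E"
    using Jall c0C CV by blast
  have "n \<le> card V" using card_mono[OF fin J0(1)] J0(3) by simp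
  then have C2: "card C + n \<le> card V" using claim1[OF c0C] two[OF c0C] by linarith
  have cover: "J0 - {c0} \<subseteq> (\<Union>c\<in>C - {c0}. Bl c \<inter> J0)"
  proof
    fix v assume v: "v \<in> J0 - {c0}"
    then have "v \<in> V" using J0 by auto
    then have b: "blk v \<in> C" "v \<in> Bl (blk v)" using blkC by auto
    have "blk v \<noteq> c0"
    proof
      assume "blk v = c0"
      then have "v \<in> Bl c0 \<inter> J0" using b v by auto
      then show False using own[OF c0C J0(2) J0(5)] v by auto
    qed
    then show "v \<in> (\<Union>c\<in>C - {c0}. Bl c \<inter> J0)" using b v by auto
  qed
  have "n - 1 = card (J0 - {c0})" using J0 by (simp add: card_Diff_singleton)
  also have "\<dots> \<le> card (\<Union>c\<in>C - {c0}. Bl c \<inter> J0)"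
    using cover by (intro card_mono) (use finC Bl_fin in auto)
  also have "\<dots> \<le> (\<Sum>c\<in>C - {c0}. card (Bl c \<inter> J0))" using finC by (intro card_UN_le) auto
  also have "\<dots> \<le> of_nat (card (C - {c0})) * (card V - n + 1 - card C)"
  proof (rule sum_bounded_above)
    fix c assume "c \<in> C - {c0}"
    then have "card (Bl c \<inter> J0) + 1 \<le> card (Bl c)" "card (Bl c) + card C \<le> card V - n + 2"
      using small J0 claim1 by auto
    then show "card (Bl c \<inter> J0) \<le> card V - n + 1 - card C" by linarith
  qed
  also have "\<dots> = (card C - 1) * (card V - n + 1 - card C)"
    using c0C finC by (simp add: card_Diff_singleton)
  finally show ?thesis using C1 C2 by auto
qed


definition is_ctr :: "'a set \<Rightarrow> ('a \<Rightarrow> 'a \<Rightarrow> bool) \<Rightarrow> nat \<Rightarrow> 'a \<Rightarrow> bool" where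
  "is_ctr V E m z \<longleftrightarrow> (\<exists>L\<subseteq>V. finite L \<and> card L = m - 1 \<and> indep L E \<and> (\<forall>l\<in>L. E z l))"

lemma dom_set:
  fixes V :: "'a set" and E :: "'a \<Rightarrow> 'a \<Rightarrow> bool"
  assumes fin: "finite V" and Ein: "\<forall>x y. E x y \<longrightarrow> x \<in> V \<and> y \<in> V"
    and sym: "\<forall>x y. E x y \<longrightarrow> E y x"
    and nb: "\<forall>v\<in>V. \<exists>w. E v w"
    and Jall: "\<forall>v\<in>V. \<exists>J\<subseteq>V. v \<in> J \<and> card J = n \<and> finite J \<and> indep J E"
    and starall: "\<forall>v\<in>V. is_ctr V E m v \<or> (\<exists>z. E v z \<and> is_ctr V E m z)"
    and cV: "c \<in> V" and L: "L \<subseteq> V" "card L = m - 1" "finite L" "indep L E" "\<forall>l\<in>L. E c l"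
    and J: "J \<subseteq> V" "c \<in> J" "card J = n" "finite J" "indep J E"
    and m2: "2 \<le> m"
  shows "m - 1 + n \<le> card V \<and> (\<exists>D\<subseteq>V. card D + 2*m \<le> 2*(card V - n) + 4 \<and> (\<forall>v\<in>V. v \<in> D \<or> (\<exists>d\<in>D. E v d)))"
proof -
  define Y where "Y = V - J"
  define S where "S = Y - L"
  have LY: "L \<subseteq> Y"
  proof
    fix l assume l: "l \<in> L"
    then have "E c l" using L by auto
    then have "l \<notin> J" using J unfolding indep_def by auto
    then show "l \<in> Y" using l L Y_def by auto
  qed
  have finY: "finite Y" "finite S" using fin Y_def S_def by auto
  have cardY: "card Y = card V - n" using J fin Y_def by (simp add: card_Diff_subset)
  have cardYLS: "card Y = card L + card S"
  proof -
    have "Y = L \<union> S" "L \<inter> S = {}" using LY S_def by auto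
    then show ?thesis using card_Un_disjoint finY L(3) by metis
  qed
  have nV: "n \<le> card V" using card_mono[OF fin J(1)] J(3) by simp
  have mt: "m - 1 + n \<le> card V" using cardY cardYLS L(2) nV by linarith
  define U' where "U' = {u\<in>J - {c}. \<forall>y\<in>S. \<not> E u y}"
  have nbL: "u \<in> U' \<Longrightarrow> E u w \<Longrightarrow> w \<in> L" for u w
  proof -
    assume u: "u \<in> U'" and uw: "E u w"
    have "w \<in> V" using Ein uw by auto
    moreover have "w \<notin> J" using J u uw unfolding indep_def U'_def by auto
    moreover have "w \<notin> S" using u uw unfolding U'_def by auto
    ultimately show "w \<in> L" using S_def Y_def by auto
  qed
  have Tex: "\<exists>T\<subseteq>V. card T \<le> card S + 1 \<and> (\<forall>u\<in>U'. \<exists>x\<in>T. E u x)"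
  proof (cases "\<exists>l\<in>L. is_ctr V E m l")
    case True
    then obtain l where lL: "l \<in> L" and lc: "is_ctr V E m l" by blast
    obtain Ll where Ll: "Ll \<subseteq> V" "finite Ll" "card Ll = m - 1" "indep Ll E" "\<forall>x\<in>Ll. E l x"
      using lc unfolding is_ctr_def by blast
    have lV: "l \<in> V" using lL L by auto
    obtain Jl where Jl: "Jl \<subseteq> V" "l \<in> Jl" "card Jl = n" "finite Jl" "indep Jl E"
      using Jall lV by blast
    define A where "A = Jl \<inter> Y"
    define NJl where "NJl = {u\<in>J. E l u}"
    define NSl where "NSl = {y\<in>S. E l y}"
    define NJA where "NJA = {u\<in>J. \<exists>a\<in>A. E u a}"
    have finJ': "finite NJl" "finite NSl" "finite NJA" "finite A"
      using J(4) finY Jl(4) unfolding NJl_def NSl_def NJA_def A_def by auto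
    have F1: "m - 1 \<le> card NJl + card NSl"
    proof -
      have "Ll \<subseteq> NJl \<union> NSl"
      proof
        fix x assume x: "x \<in> Ll"
        then have lx: "E l x" using Ll by auto
        have "x \<in> V" using x Ll by auto
        moreover have "x \<notin> L" using lx lL L(4) unfolding indep_def by auto
        ultimately show "x \<in> NJl \<union> NSl" using lx unfolding NJl_def NSl_def S_def Y_def by auto
      qed
      then have "card Ll \<le> card (NJl \<union> NSl)" using finJ' by (intro card_mono) auto
      also have "\<dots> \<le> card NJl + card NSl" by (rule card_Un_le)
      finally show ?thesis using Ll by simp
    qed
    have F2: "card A = card (J - Jl)"
    proof -
      have "Jl = (Jl \<inter> J) \<union> A" "(Jl \<inter> J) \<inter> A = {}" using Jl(1) unfolding A_def Y_def by auto
      then have "card Jl = card (Jl \<inter> J) + card A" using finJ' Jl(4) card_Un_disjoint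
        by (metis finite_Int)
      moreover have "card J = card (J \<inter> Jl) + card (J - Jl)"
        using J(4) by (metis Int_commute card_Int_Diff)
      ultimately show ?thesis using Jl(3) J(3) by (simp add: Int_commute)
    qed
    have F3: "NJA \<subseteq> J - Jl"
    proof
      fix u assume u: "u \<in> NJA"
      then obtain a where a: "a \<in> A" "E u a" "u \<in> J" unfolding NJA_def by auto
      have "u \<notin> Jl" using a Jl(5) unfolding A_def indep_def by auto
      then show "u \<in> J - Jl" using a by auto
    qed
    have F4: "card (A \<inter> S) + card NSl \<le> card S"
    proof -
      have "(A \<inter> S) \<inter> NSl = {}"
      proof (rule ccontr)
        assume "(A \<inter> S) \<inter> NSl \<noteq> {}"
        then obtain y where "y \<in> A" "E l y" unfolding NSl_def by auto
        then show False using Jl(2,5) unfolding A_def indep_def by auto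
      qed
      moreover have "(A \<inter> S) \<union> NSl \<subseteq> S" unfolding NSl_def by auto
      ultimately have "card ((A \<inter> S) \<union> NSl) = card (A \<inter> S) + card NSl"
        using finY finJ' by (intro card_Un_disjoint) auto
      moreover have "card ((A \<inter> S) \<union> NSl) \<le> card S"
        using \<open>(A \<inter> S) \<union> NSl \<subseteq> S\<close> finY by (intro card_mono) auto
      ultimately show ?thesis by simp
    qed
    define R where "R = {u\<in>U'. \<not> E u l \<and> (\<forall>y\<in>L - A. \<not> E u y)}"
    have lA: "l \<in> A" using Jl(2) lL LY unfolding A_def by auto
    have F5: "card R + card NJl \<le> card A"
    proof -
      have "R \<union> NJl \<subseteq> NJA"
      proof
        fix u assume u: "u \<in> R \<union> NJl"
        show "u \<in> NJA"
        proof (cases "u \<in> NJl")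
          case True
          then have "E u l" "u \<in> J" using sym unfolding NJl_def by auto
          then show ?thesis using lA unfolding NJA_def by auto
        next
          case False
          then have uR: "u \<in> R" using u by auto
          then have uU: "u \<in> U'" unfolding R_def by auto
          then have "u \<in> V" using J unfolding U'_def by auto
          then obtain w where uw: "E u w" using nb by auto
          then have "w \<in> L" using nbL uU by auto
          then have "w \<in> A" using uR uw unfolding R_def by auto
          then show ?thesis using uw uU unfolding NJA_def U'_def by auto
        qed
      qed
      moreover have "R \<inter> NJl = {}" using sym unfolding R_def NJl_def by auto
      moreover have "finite R" using J(4) unfolding R_def U'_def by auto
      ultimately have "card R + card NJl \<le> card NJA" using finJ' card_Un_disjoint card_mono
        by (metis finite_Un)
      also have "\<dots> \<le> card (J - Jl)" using F3 J(4) by (intro card_mono) auto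
      finally show ?thesis using F2 by simp
    qed
    have F6: "card A = card (A \<inter> L) + card (A \<inter> S)"
    proof -
      have "A = (A \<inter> L) \<union> (A \<inter> S)" "(A \<inter> L) \<inter> (A \<inter> S) = {}" unfolding A_def S_def by auto
      then show ?thesis using finJ' card_Un_disjoint by (metis finite_Int)
    qed
    have F7: "card (L - A) + card (A \<inter> L) = m - 1"
      using L(2,3) by (metis Int_commute card_Int_Diff add.commute)
    define pick where "pick u = (SOME w. E u w)" for u
    have pickE: "u \<in> R \<Longrightarrow> E u (pick u)" for u
    proof -
      assume "u \<in> R"
      then have "u \<in> V" using J unfolding R_def U'_def by auto
      then have "\<exists>w. E u w" using nb by auto
      then show ?thesis unfolding pick_def by (rule someI_ex)
    qed
    define T where "T = insert l ((L - A) \<union> pick ` R)"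
    have finR: "finite R" using J(4) unfolding R_def U'_def by auto
    have cT: "card T \<le> 1 + card (L - A) + card R"
    proof -
      have "card T \<le> Suc (card ((L - A) \<union> pick ` R))" unfolding T_def
        by (rule card_insert_le_m1) (auto simp: card_insert_if finR L(3))
      also have "\<dots> \<le> Suc (card (L - A) + card (pick ` R))" using card_Un_le by auto
      also have "\<dots> \<le> Suc (card (L - A) + card R)" using card_image_le[OF finR] by auto
      finally show ?thesis by simp
    qed
    have "card T \<le> card S + 1" using cT F1 F4 F5 F6 F7 by linarith
    moreover have "T \<subseteq> V"
    proof -
      have "pick ` R \<subseteq> V" using pickE Ein by auto
      then show ?thesis using lV L(1) unfolding T_def by auto
    qed
    moreover have "\<forall>u\<in>U'. \<exists>x\<in>T. E u x"
    proof
      fix u assume u: "u \<in> U'"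
      show "\<exists>x\<in>T. E u x"
      proof (cases "E u l \<or> (\<exists>y\<in>L - A. E u y)")
        case True then show ?thesis unfolding T_def by auto
      next
        case False
        then have "u \<in> R" using u unfolding R_def by auto
        then show ?thesis using pickE unfolding T_def by auto
      qed
    qed
    ultimately show ?thesis by blast
  next
    case False
    obtain l0 where l0: "l0 \<in> L" using L(2) m2 card_0_eq[OF L(3)] by fastforce
    have "\<forall>u\<in>U'. E u l0"
    proof
      fix u assume u: "u \<in> U'"
      then have uV: "u \<in> V" using J unfolding U'_def by auto
      have "\<not> (\<exists>z. E u z \<and> is_ctr V E m z)" using nbL u False by blast
      then have "is_ctr V E m u" using starall uV by blast
      then obtain Lu where Lu: "Lu \<subseteq> V" "finite Lu" "card Lu = m - 1" "\<forall>x\<in>Lu. E u x"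
        unfolding is_ctr_def by blast
      have "Lu \<subseteq> L" using Lu nbL u by auto
      then have "Lu = L" using card_subset_eq[OF L(3)] Lu L(2) by auto
      then show "E u l0" using Lu l0 by auto
    qed
    then show ?thesis using l0 L(1) by (intro exI[of _ "{l0}"]) auto
  qed
  then obtain T where T: "T \<subseteq> V" "card T \<le> card S + 1" "\<forall>u\<in>U'. \<exists>x\<in>T. E u x" by blast
  define D where "D = insert c (S \<union> T)"
  have "D \<subseteq> V" using cV T(1) unfolding D_def S_def Y_def by auto
  moreover have "card D + 2*m \<le> 2*(card V - n) + 4"
  proof -
    have "card D \<le> Suc (card (S \<union> T))" unfolding D_def
      using card_insert_le_m1 by (metis card_insert_if finite_Un finY(2) T(1) fin finite_subset le_SucI order_refl)
    also have "\<dots> \<le> Suc (card S + card T)" using card_Un_le by auto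
    finally show ?thesis using T(2) cardY cardYLS L(2) m2 by linarith
  qed
  moreover have "\<forall>v\<in>V. v \<in> D \<or> (\<exists>d\<in>D. E v d)"
  proof
    fix v assume v: "v \<in> V"
    show "v \<in> D \<or> (\<exists>d\<in>D. E v d)"
    proof (cases "v \<in> J")
      case True
      show ?thesis
      proof (cases "v = c \<or> (\<exists>y\<in>S. E v y)")
        case True then show ?thesis unfolding D_def by auto
      next
        case False
        then have "v \<in> U'" using \<open>v \<in> J\<close> unfolding U'_def by auto
        then show ?thesis using T(3) unfolding D_def by auto
      qed
    next
      case False
      then have "v \<in> Y" using v Y_def by auto
      then show ?thesis
      proof (cases "v \<in> L")
        case True
        then have "E v c" using L(5) sym by auto
        then show ?thesis unfolding D_def by auto
      next
        case False
        then show ?thesis using \<open>v \<in> Y\<close> unfolding D_def S_def by auto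
      qed
    qed
  qed
  ultimately show ?thesis using mt by blast
qed


lemma ceil_le_aux:
  fixes a j k :: nat
  assumes "a \<le> j * k" "1 \<le> k"
  shows "nat \<lceil>real a / real k\<rceil> \<le> j"
proof -
  have "real a \<le> real j * real k" using assms(1) by (metis of_nat_le_iff of_nat_mult)
  then have "real a / real k \<le> real j" using assms(2) by (simp add: divide_le_eq)
  then have "\<lceil>real a / real k\<rceil> \<le> \<lceil>real j\<rceil>" by (rule ceiling_mono)
  then have "\<lceil>real a / real k\<rceil> \<le> int j" by simp
  then show ?thesis unfolding nat_le_iff .
qed

lemma lower_bound:
  fixes V :: "nat set" and E :: "nat \<Rightarrow> nat \<Rightarrow> bool"
  assumes sg: "simple_graph V E" and ne: "V \<noteq> {}"
    and full: "is_full V E (star_V m) star_E (empty_V n) empty_E" and m2: "2 \<le> m"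
  shows "\<exists>k::nat. k \<ge> 1 \<and> n + max (k + nat \<lceil>real (n - 1) / real k\<rceil>) (2 * m - 3 - k) \<le> card V"
proof -
  have fin: "finite V" and Ein: "\<forall>x y. E x y \<longrightarrow> x \<in> V \<and> y \<in> V"
    and sym: "\<forall>x y. E x y \<longrightarrow> E y x" and irr: "\<forall>x. \<not> E x x"
    using sg unfolding simple_graph_def by auto
  have Jall: "\<forall>v\<in>V. \<exists>J\<subseteq>V. v \<in> J \<and> card J = n \<and> finite J \<and> indep J E"
  proof
    fix v assume "v \<in> V"
    then have "in_induced_copy V E (empty_V n) empty_E v" using full unfolding is_full_def by blast
    then show "\<exists>J\<subseteq>V. v \<in> J \<and> card J = n \<and> finite J \<and> indep J E" by (rule copy_emptyD)
  qed
  have stars: "\<forall>v\<in>V. \<exists>c L. c \<in> V \<and> L \<subseteq> V \<and> c \<notin> L \<and> card L = m - 1 \<and> finite L \<and> indep L E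
     \<and> (\<forall>l\<in>L. E c l) \<and> (v = c \<or> v \<in> L)"
  proof
    fix v assume "v \<in> V"
    then have "in_induced_copy V E (star_V m) star_E v" using full unfolding is_full_def by blast
    then show "\<exists>c L. c \<in> V \<and> L \<subseteq> V \<and> c \<notin> L \<and> card L = m - 1 \<and> finite L \<and> indep L E
     \<and> (\<forall>l\<in>L. E c l) \<and> (v = c \<or> v \<in> L)" by (rule copy_starD)
  qed
  have starall: "\<forall>v\<in>V. is_ctr V E m v \<or> (\<exists>z. E v z \<and> is_ctr V E m z)"
  proof
    fix v assume "v \<in> V"
    then obtain c L where cL: "c \<in> V" "L \<subseteq> V" "card L = m - 1" "finite L" "indep L E"
      "\<forall>l\<in>L. E c l" "v = c \<or> v \<in> L" using stars by blast
    then have ic: "is_ctr V E m c" unfolding is_ctr_def by blast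
    show "is_ctr V E m v \<or> (\<exists>z. E v z \<and> is_ctr V E m z)"
    proof (cases "v = c")
      case True then show ?thesis using ic by simp
    next
      case False
      then have "v \<in> L" using cL(7) by simp
      then have "E c v" using cL(6) by simp
      then have "E v c" using sym by blast
      then show ?thesis using ic by blast
    qed
  qed
  have nb: "\<forall>v\<in>V. \<exists>w. E v w"
  proof
    fix v assume "v \<in> V"
    then obtain c L where cL: "c \<in> V" "L \<subseteq> V" "card L = m - 1" "finite L" "indep L E"
      "\<forall>l\<in>L. E c l" "v = c \<or> v \<in> L" using stars by blast
    show "\<exists>w. E v w"
    proof (cases "v = c")
      case True
      have "card L \<noteq> 0" using cL(3) m2 by simp
      then obtain l where "l \<in> L" by fastforce
      then show ?thesis using cL(6) True by blast
    next
      case False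
      then have "v \<in> L" using cL(7) by simp
      then have "E c v" using cL(6) by simp
      then have "E v c" using sym by blast
      then show ?thesis by blast
    qed
  qed
  obtain v0 where "v0 \<in> V" using ne by auto
  then obtain c L where cL: "c \<in> V" "L \<subseteq> V" "card L = m - 1" "finite L" "indep L E"
      "\<forall>l\<in>L. E c l" using stars by blast
  obtain J where J: "J \<subseteq> V" "c \<in> J" "card J = n" "finite J" "indep J E" using Jall cL by blast
  obtain D where D: "D \<subseteq> V" "card D + 2*m \<le> 2*(card V - n) + 4" "\<forall>v\<in>V. v \<in> D \<or> (\<exists>d\<in>D. E v d)"
    and mt: "m - 1 + n \<le> card V"
    using dom_set[OF fin Ein sym nb Jall starall cL(1) cL(2) cL(3) cL(4) cL(5) cL(6) J m2] by blast
  obtain C f where C: "C \<subseteq> V" "card C \<le> card D" "\<forall>v\<in>V-C. f v \<in> C \<and> E v (f v)"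
    "\<forall>c\<in>C. \<exists>v\<in>V-C. f v = c"
    using star_partition[OF fin Ein sym irr nb D(1) D(3)] by blast
  have bc: "1 \<le> card C" "card C + n \<le> card V" "n - 1 \<le> (card C - 1) * (card V - n + 1 - card C)"
    using block_count[OF fin C(1) C(3) C(4) Jall ne] by auto
  define t where "t = card V - n"
  have Vt: "card V = t + n" using bc(2) t_def by simp
  have Dt: "card D + 2 * m \<le> 2 * t + 4" using D(2) t_def by simp
  have Ct: "card C \<le> t" using bc(2) Vt by simp
  define k where "k = t + 1 - card C"
  have k1: "1 \<le> k" using Ct k_def by simp
  have kC: "k + (card C - 1) = t" using Ct bc(1) k_def by simp
  have nk: "n - 1 \<le> (card C - 1) * k" using bc(3) unfolding k_def t_def by simp
  have ceil: "nat \<lceil>real (n - 1) / real k\<rceil> \<le> card C - 1"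
    using ceil_le_aux[OF _ k1] nk by (simp add: mult.commute)
  have a1: "k + nat \<lceil>real (n - 1) / real k\<rceil> \<le> t" using ceil kC by linarith
  have "card C + 2 * m \<le> 2 * t + 4" using Dt C(2) by linarith
  then have a2: "2 * m - 3 - k \<le> t" using kC k_def by linarith
  have "max (k + nat \<lceil>real (n - 1) / real k\<rceil>) (2 * m - 3 - k) \<le> t" using a1 a2 by simp
  then show ?thesis using k1 Vt by (intro exI[of _ k]) simp
qed


definition win :: "nat \<Rightarrow> nat \<Rightarrow> nat \<Rightarrow> nat \<Rightarrow> bool" where
  "win k x i j \<longleftrightarrow> min (i*k) (x - k) \<le> j \<and> j < min (i*k) (x - k) + k"

lemma win_set: "k \<le> x \<Longrightarrow> {j. win k x i j} = {min (i*k) (x - k)..<min (i*k) (x - k) + k}"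
  unfolding win_def by auto

lemma win_card: "k \<le> x \<Longrightarrow> card {j. win k x i j} = k"
  by (simp add: win_set)

lemma win_lt: "k \<le> x \<Longrightarrow> win k x i j \<Longrightarrow> j < x"
  unfolding win_def by auto

lemma win_cover:
  assumes "1 \<le> k" "k \<le> x" "x \<le> q * k" "j < x"
  shows "\<exists>i<q. win k x i j"
proof (cases "(j div k + 1) * k \<le> x")
  case True
  define i where "i = j div k"
  have dm: "j div k * k + j mod k = j" by (rule div_mult_mod_eq)
  have "j mod k < k" using assms(1) by simp
  then have ik: "i * k \<le> j" "j < i * k + k" using dm unfolding i_def by linarith+
  have "i * k + k \<le> x" using True i_def by (simp add: algebra_simps)
  then have "min (i*k) (x - k) = i * k" by auto
  moreover have "i < q"
  proof -
    have "i * k < q * k" using \<open>i * k + k \<le> x\<close> assms(1,3) by linarith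
    then show ?thesis by (simp add: mult_less_cancel2)
  qed
  ultimately show ?thesis using ik unfolding win_def by auto
next
  case False
  have "x - k \<le> j"
  proof -
    have dm: "j div k * k + j mod k = j" by (rule div_mult_mod_eq)
    have "j mod k < k" using assms(1) by simp
    then have "j < j div k * k + k" using dm by linarith
    have "(j div k + 1) * k = j div k * k + k" by (simp add: algebra_simps)
    then show ?thesis using False dm by linarith
  qed
  have "(q - 1) * k + k = q * k" using assms by (cases q) auto
  then have "x - k \<le> (q - 1) * k" using assms(3) by linarith
  then have "min ((q-1)*k) (x - k) = x - k" by auto
  moreover have "q \<ge> 1" using assms by (cases q) auto
  ultimately show ?thesis using \<open>x - k \<le> j\<close> assms unfolding win_def
    by (intro exI[of _ "q - 1"]) auto
qed

definition cadj :: "nat \<Rightarrow> nat \<Rightarrow> nat \<Rightarrow> nat \<Rightarrow> nat \<Rightarrow> nat \<Rightarrow> nat \<Rightarrow> bool" where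
  "cadj a b k xA xB u v \<longleftrightarrow>
     (u < a \<and> a \<le> v \<and> v < a + b)
   \<or> (u < a \<and> a + b \<le> v \<and> v < a + b + xA \<and> win k xA u (v - (a + b)))
   \<or> (a \<le> u \<and> u < a + b \<and> a + b + xA \<le> v \<and> v < a + b + xA + xB
        \<and> win k xB (u - a) (v - (a + b + xA)))"

definition cE :: "nat \<Rightarrow> nat \<Rightarrow> nat \<Rightarrow> nat \<Rightarrow> nat \<Rightarrow> nat \<Rightarrow> nat \<Rightarrow> bool" where
  "cE a b k xA xB u v \<longleftrightarrow> cadj a b k xA xB u v \<or> cadj a b k xA xB v u"

context
  fixes a b k xA xB :: nat
begin

abbreviation "E \<equiv> cE a b k xA xB"

lemma E_sym: "E u v \<longleftrightarrow> E v u" unfolding cE_def by auto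
lemma E_irr: "\<not> E u u" unfolding cE_def cadj_def by auto
lemma E_in: "E u v \<Longrightarrow> u < (a + b) + xA + xB \<and> v < (a + b) + xA + xB"
  unfolding cE_def cadj_def by auto
lemma E_LL: "(a + b) \<le> u \<Longrightarrow> (a + b) \<le> v \<Longrightarrow> \<not> E u v"
  unfolding cE_def cadj_def by auto
lemma E_AA: "u < a \<Longrightarrow> v < a \<Longrightarrow> \<not> E u v"
  unfolding cE_def cadj_def by auto
lemma E_BB: "a \<le> u \<Longrightarrow> a \<le> v \<Longrightarrow> u < (a + b) \<Longrightarrow> v < (a + b) \<Longrightarrow> \<not> E u v"
  unfolding cE_def cadj_def by auto
lemma E_AB: "u < a \<Longrightarrow> a \<le> v \<Longrightarrow> v < (a + b) \<Longrightarrow> E u v"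
  unfolding cE_def cadj_def by auto
lemma E_A_AL: "u < a \<Longrightarrow> j < xA \<Longrightarrow> E u ((a + b) + j) \<longleftrightarrow> win k xA u j"
  unfolding cE_def cadj_def by auto
lemma E_A_BL: "u < a \<Longrightarrow> xA \<le> j \<Longrightarrow> \<not> E u ((a + b) + j)"
  unfolding cE_def cadj_def by auto
lemma E_B_AL: "a \<le> u \<Longrightarrow> u < (a + b) \<Longrightarrow> j < xA \<Longrightarrow> \<not> E u ((a + b) + j)"
  unfolding cE_def cadj_def by auto
lemma E_B_BL: "a \<le> u \<Longrightarrow> u < (a + b) \<Longrightarrow> j < xB \<Longrightarrow> E u ((a + b) + xA + j) \<longleftrightarrow> win k xB (u - a) j"
  unfolding cE_def cadj_def by auto

lemma WA_props:
  assumes "k \<le> xA"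
  shows "(\<lambda>j. (a + b) + j) ` {j. win k xA i j} \<subseteq> {(a + b)..<(a + b) + xA}"
    "card ((\<lambda>j. (a + b) + j) ` {j. win k xA i j}) = k"
proof -
  show "(\<lambda>j. (a + b) + j) ` {j. win k xA i j} \<subseteq> {(a + b)..<(a + b) + xA}" using win_lt[OF assms] by auto
  have "inj (\<lambda>j::nat. (a + b) + j)" by (simp add: inj_def)
  then show "card ((\<lambda>j. (a + b) + j) ` {j. win k xA i j}) = k"
    using card_image win_card[OF assms] by (metis inj_on_subset subset_UNIV)
qed

lemma WB_props:
  assumes "k \<le> xB"
  shows "(\<lambda>j. (a + b) + xA + j) ` {j. win k xB i j} \<subseteq> {(a + b) + xA..<(a + b) + xA + xB}"
    "card ((\<lambda>j. (a + b) + xA + j) ` {j. win k xB i j}) = k"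
proof -
  show "(\<lambda>j. (a + b) + xA + j) ` {j. win k xB i j} \<subseteq> {(a + b) + xA..<(a + b) + xA + xB}" using win_lt[OF assms] by auto
  have "inj (\<lambda>j::nat. (a + b) + xA + j)" by (simp add: inj_def)
  then show "card ((\<lambda>j. (a + b) + xA + j) ` {j. win k xB i j}) = k"
    using card_image win_card[OF assms] by (metis inj_on_subset subset_UNIV)
qed

lemma construction:
  assumes a1: "1 \<le> a" and b1: "1 \<le> b" and k1: "1 \<le> k" and xA: "k \<le> xA" "xA \<le> a * k"
    and xB: "k \<le> xB" "xB \<le> b * k"
    and X: "xA + xB = n - 1 + k" and mb: "m - 1 \<le> k + b" and ma: "m - 1 \<le> k + a"
    and m2: "2 \<le> m" and n1: "1 \<le> n"
  shows "is_full {0..<(a + b) + xA + xB} E (star_V m) star_E (empty_V n) empty_E"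
proof -
  define V where "V = {0..<(a + b) + xA + xB}"
  define LV where "LV = {(a + b)..<(a + b) + xA + xB}"
  define WA where "WA i = (\<lambda>j. (a + b) + j) ` {j. win k xA i j}" for i
  define WB where "WB i = (\<lambda>j. (a + b) + xA + j) ` {j. win k xB i j}" for i
  have irr: "\<forall>x. \<not> E x x" using E_irr by blast
  have sym: "\<forall>x y. E x y \<longrightarrow> E y x" using E_sym by blast
  have WAs: "WA i \<subseteq> {(a + b)..<(a + b) + xA}" "card (WA i) = k" for i
    using WA_props[OF xA(1)] WA_def by auto
  have WBs: "WB i \<subseteq> {(a + b) + xA..<(a + b) + xA + xB}" "card (WB i) = k" for i
    using WB_props[OF xB(1)] WB_def by auto
  have finWA: "finite (WA i)" for i using WAs(1)[of i] finite_subset by blast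
  have finWB: "finite (WB i)" for i using WBs(1)[of i] finite_subset by blast
  have starA: "in_induced_copy V E (star_V m) star_E v"
    if i: "i < a" and v: "v = i \<or> v \<in> {a..<(a + b)} \<union> WA i" for i v
  proof (rule copy_starI[where c = i and K = "{a..<(a + b)} \<union> WA i"])
    show "i \<in> V" using i V_def by auto
    show "{a..<(a + b)} \<union> WA i \<subseteq> V" using WAs(1)[of i] V_def by auto
    show "i \<notin> {a..<(a + b)} \<union> WA i" using WAs(1)[of i] i by auto
    show "finite ({a..<(a + b)} \<union> WA i)" using finWA by auto
    have "{a..<(a + b)} \<inter> WA i = {}" using WAs(1)[of i] by auto
    then have "card ({a..<(a + b)} \<union> WA i) = card {a..<(a + b)} + card (WA i)"
      using finWA by (intro card_Un_disjoint) auto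
    then have "card ({a..<(a + b)} \<union> WA i) = b + k" using WAs(2) by simp
    then show "m - 1 \<le> card ({a..<(a + b)} \<union> WA i)" using mb by simp
    show "indep ({a..<(a + b)} \<union> WA i) E" unfolding indep_def
    proof (intro ballI)
      fix x y assume x: "x \<in> {a..<(a + b)} \<union> WA i" and y: "y \<in> {a..<(a + b)} \<union> WA i"
      have xy: "\<not> E x y" if x: "x \<in> {a..<(a + b)}" and y: "y \<in> WA i" for x y
      proof -
        obtain j where "y = (a + b) + j" "j < xA" using y WAs(1)[of i] by (metis atLeastLessThan_iff le_Suc_ex nat_add_left_cancel_less subsetD)
        then show ?thesis using E_B_AL x by auto
      qed
      show "\<not> E x y"
      proof (cases "x \<in> {a..<(a + b)}")
        case True
        then show ?thesis
        proof (cases "y \<in> {a..<(a + b)}")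
          case True then show ?thesis using \<open>x \<in> {a..<(a + b)}\<close> E_BB by auto
        next
          case False then show ?thesis using y xy True by auto
        qed
      next
        case False
        then have xW: "x \<in> WA i" using x by auto
        show ?thesis
        proof (cases "y \<in> {a..<(a + b)}")
          case True then show ?thesis using xy[OF True xW] E_sym by blast
        next
          case False
          then have "y \<in> WA i" using y by auto
          then have "a + b \<le> x" "a + b \<le> y" using xW WAs(1)[of i] by (meson atLeastLessThan_iff subsetD)+
          then show ?thesis using E_LL by blast
        qed
      qed
    qed
    show "\<forall>l\<in>{a..<(a + b)} \<union> WA i. E i l"
    proof
      fix l assume l: "l \<in> {a..<(a + b)} \<union> WA i"
      show "E i l"
      proof (cases "l \<in> {a..<(a + b)}")
        case True then show ?thesis using E_AB i by auto
      next
        case False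
        then obtain j where "l = (a + b) + j" "win k xA i j" using l WA_def by auto
        then show ?thesis using E_A_AL[OF i] win_lt[OF xA(1)] by auto
      qed
    qed
  qed (use v m2 irr sym in auto)
  have starB: "in_induced_copy V E (star_V m) star_E v"
    if i: "i < b" and v: "v = a + i \<or> v \<in> {0..<a} \<union> WB i" for i v
  proof (rule copy_starI[where c = "a + i" and K = "{0..<a} \<union> WB i"])
    show "a + i \<in> V" using i V_def by auto
    show "{0..<a} \<union> WB i \<subseteq> V" using WBs(1)[of i] V_def by auto
    show "a + i \<notin> {0..<a} \<union> WB i" using WBs(1)[of i] i by auto
    show "finite ({0..<a} \<union> WB i)" using finWB by auto
    have "{0..<a} \<inter> WB i = {}" using WBs(1)[of i] by auto
    then have "card ({0..<a} \<union> WB i) = card {0..<a} + card (WB i)"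
      using finWB by (intro card_Un_disjoint) auto
    then have "card ({0..<a} \<union> WB i) = a + k" using WBs(2) by simp
    then show "m - 1 \<le> card ({0..<a} \<union> WB i)" using ma by simp
    show "indep ({0..<a} \<union> WB i) E" unfolding indep_def
    proof (intro ballI)
      fix x y assume x: "x \<in> {0..<a} \<union> WB i" and y: "y \<in> {0..<a} \<union> WB i"
      have xy: "\<not> E x y" if x: "x \<in> {0..<a}" and y: "y \<in> WB i" for x y
      proof -
        have "y \<ge> (a + b) + xA" using y WBs(1)[of i] by auto
        then obtain j where "y = (a + b) + j" "xA \<le> j" by (metis add_leD1 le_add_diff_inverse nat_add_left_cancel_le)
        then show ?thesis using E_A_BL x by auto
      qed
      show "\<not> E x y"
      proof (cases "x \<in> {0..<a}")
        case True
        then show ?thesis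
        proof (cases "y \<in> {0..<a}")
          case True then show ?thesis using \<open>x \<in> {0..<a}\<close> E_AA by auto
        next
          case False then show ?thesis using y xy True by auto
        qed
      next
        case False
        then have xW: "x \<in> WB i" using x by auto
        show ?thesis
        proof (cases "y \<in> {0..<a}")
          case True then show ?thesis using xy[OF True xW] E_sym by blast
        next
          case False
          then have "y \<in> WB i" using y by auto
          then have "a + b \<le> x" "a + b \<le> y" using xW WBs(1)[of i]
            by (meson atLeastLessThan_iff subsetD le_add1 order_trans)+
          then show ?thesis using E_LL by blast
        qed
      qed
    qed
    show "\<forall>l\<in>{0..<a} \<union> WB i. E (a + i) l"
    proof
      fix l assume l: "l \<in> {0..<a} \<union> WB i"
      show "E (a + i) l"
      proof (cases "l \<in> {0..<a}")
        case True then show ?thesis using E_AB[of l "a + i"] i E_sym by auto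
      next
        case False
        then obtain j where "l = (a + b) + xA + j" "win k xB i j" using l WB_def by auto
        then show ?thesis using E_B_BL[of "a + i" j] i win_lt[OF xB(1)] by auto
      qed
    qed
  qed (use v m2 irr sym in auto)
  have cardLV: "card LV = xA + xB" using LV_def by simp
  have indL: "indep LV E" using E_LL unfolding indep_def LV_def by auto
  have empL: "in_induced_copy V E (empty_V n) empty_E v" if "v \<in> LV" for v
    by (rule copy_emptyI[where J = LV]) (use that cardLV indL X n1 k1 in \<open>auto simp: LV_def V_def\<close>)
  have empA: "in_induced_copy V E (empty_V n) empty_E i" if i: "i < a" for i
  proof (rule copy_emptyI[where J = "insert i (LV - WA i)"])
    have sub: "WA i \<subseteq> LV" using WAs(1)[of i] LV_def by auto
    have "card (LV - WA i) = xA + xB - k" using card_Diff_subset[OF finWA sub] cardLV WAs(2) by simp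
    moreover have "i \<notin> LV - WA i" using i LV_def by auto
    ultimately have "card (insert i (LV - WA i)) = xA + xB - k + 1" using LV_def by simp
    then show "n \<le> card (insert i (LV - WA i))" using X xA xB by linarith
    show "indep (insert i (LV - WA i)) E" unfolding indep_def
    proof (intro ballI)
      fix x y assume x: "x \<in> insert i (LV - WA i)" and y: "y \<in> insert i (LV - WA i)"
      have iy: "\<not> E i y" if y: "y \<in> LV - WA i" for y
      proof -
        obtain j where j: "y = (a + b) + j" "j < xA + xB" using y LV_def
          by (metis Diff_iff atLeastLessThan_iff le_Suc_ex add.assoc nat_add_left_cancel_less)
        show ?thesis
        proof (cases "j < xA")
          case True
          then have "\<not> win k xA i j" using y j WA_def by auto
          then show ?thesis using E_A_AL[OF i True] j by auto
        next
          case False then show ?thesis using E_A_BL[OF i] j by auto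
        qed
      qed
      show "\<not> E x y"
      proof (cases "x = i")
        case True
        then show ?thesis using iy y E_irr by auto
      next
        case False
        then have xL: "x \<in> LV - WA i" using x by auto
        show ?thesis
        proof (cases "y = i")
          case True then show ?thesis using iy[OF xL] E_sym by blast
        next
          case False
          then have "y \<in> LV" using y by auto
          then show ?thesis using xL indL unfolding indep_def by auto
        qed
      qed
    qed
  qed (use i LV_def V_def n1 in auto)
  have empB: "in_induced_copy V E (empty_V n) empty_E (a + i)" if i: "i < b" for i
  proof (rule copy_emptyI[where J = "insert (a + i) (LV - WB i)"])
    have sub: "WB i \<subseteq> LV" using WBs(1)[of i] LV_def by auto
    have "card (LV - WB i) = xA + xB - k" using card_Diff_subset[OF finWB sub] cardLV WBs(2) by simp
    moreover have "a + i \<notin> LV - WB i" using i LV_def by auto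
    ultimately have "card (insert (a + i) (LV - WB i)) = xA + xB - k + 1" using LV_def by simp
    then show "n \<le> card (insert (a + i) (LV - WB i))" using X xA xB by linarith
    show "indep (insert (a + i) (LV - WB i)) E" unfolding indep_def
    proof (intro ballI)
      fix x y assume x: "x \<in> insert (a + i) (LV - WB i)" and y: "y \<in> insert (a + i) (LV - WB i)"
      have iy: "\<not> E (a + i) y" if y: "y \<in> LV - WB i" for y
      proof -
        obtain j where j: "y = (a + b) + j" "j < xA + xB" using y LV_def
          by (metis Diff_iff atLeastLessThan_iff le_Suc_ex add.assoc nat_add_left_cancel_less)
        show ?thesis
        proof (cases "j < xA")
          case True
          then show ?thesis using E_B_AL[of "a + i" j] i j by auto
        next
          case False
          then obtain j' where j': "j = xA + j'" "j' < xB" using j by (metis le_Suc_ex not_le add_less_cancel_left)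
          then have "\<not> win k xB i j'" using y j WB_def by auto
          then show ?thesis using E_B_BL[of "a + i" j'] i j j' by (auto simp: add.assoc)
        qed
      qed
      show "\<not> E x y"
      proof (cases "x = a + i")
        case True
        then show ?thesis using iy y E_irr by auto
      next
        case False
        then have xL: "x \<in> LV - WB i" using x by auto
        show ?thesis
        proof (cases "y = a + i")
          case True then show ?thesis using iy[OF xL] E_sym by blast
        next
          case False
          then have "y \<in> LV" using y by auto
          then show ?thesis using xL indL unfolding indep_def by auto
        qed
      qed
    qed
  qed (use i LV_def V_def n1 in auto)
  show ?thesis unfolding is_full_def V_def[symmetric]
  proof (rule conjI)
    show "simple_graph V E" unfolding simple_graph_def V_def using E_in E_sym E_irr by auto
  next
    show "\<forall>v\<in>V. in_induced_copy V E (star_V m) star_E v \<and> in_induced_copy V E (empty_V n) empty_E v"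
    proof
    fix v assume v: "v \<in> V"
    show "in_induced_copy V E (star_V m) star_E v \<and> in_induced_copy V E (empty_V n) empty_E v"
    proof (cases "v < a")
      case True then show ?thesis using starA[of v v] empA by auto
    next
      case nA: False
      show ?thesis
      proof (cases "v < (a + b)")
        case True
        then obtain i where i: "v = a + i" "i < b" using nA by (metis add_less_cancel_left le_Suc_ex not_le)
        then show ?thesis using starB[of i v] empB[of i] by auto
      next
        case nB: False
        then have vL: "v \<in> LV" using v V_def LV_def by auto
        have "in_induced_copy V E (star_V m) star_E v"
        proof (cases "v < (a + b) + xA")
          case True
          obtain j where j: "v = (a + b) + j" "j < xA" using True nB by (metis add_less_cancel_left le_Suc_ex not_le)
          obtain i where "i < a" "win k xA i j" using win_cover[OF k1 xA(1) xA(2) j(2)] by blast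
          then show ?thesis using starA[of i v] j WA_def by auto
        next
          case False
          obtain j where j: "v = (a + b) + xA + j" "j < xB" using False v V_def
            by (metis add_less_cancel_left atLeastLessThan_iff le_Suc_ex not_le)
          obtain i where "i < b" "win k xB i j" using win_cover[OF k1 xB(1) xB(2) j(2)] by blast
          then show ?thesis using starB[of i v] j WB_def by auto
        qed
        then show ?thesis using empL[OF vL] by auto
      qed
    qed
    qed
  qed
qed

end

lemma ceil_pos_aux:
  fixes a k :: nat
  assumes "1 \<le> a" "1 \<le> k"
  shows "1 \<le> nat \<lceil>real a / real k\<rceil>"
proof -
  have "0 < real a / real k" using assms by simp
  then have "1 \<le> \<lceil>real a / real k\<rceil>" by (simp add: le_ceiling_iff)
  then have "nat 1 \<le> nat \<lceil>real a / real k\<rceil>" by (rule nat_mono)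
  then show ?thesis by simp
qed

lemma ceil_ge_aux:
  fixes a k :: nat
  assumes "1 \<le> k"
  shows "a \<le> k * nat \<lceil>real a / real k\<rceil>"
proof -
  have "real a / real k \<le> of_int \<lceil>real a / real k\<rceil>" by (rule le_of_int_ceiling)
  moreover have "0 \<le> \<lceil>real a / real k\<rceil>" using ceiling_mono[of 0 "real a / real k"] by simp
  ultimately have "real a / real k \<le> real (nat \<lceil>real a / real k\<rceil>)" by simp
  moreover have kpos: "0 < real k" using assms by simp
  ultimately have "real a \<le> real (nat \<lceil>real a / real k\<rceil>) * real k"
    using pos_divide_le_eq[OF kpos] by blast
  then show ?thesis by (metis of_nat_le_iff of_nat_mult mult.commute)
qed

lemma upper_bound:
  fixes n m k :: nat
  assumes m2: "2 \<le> m" and mn: "m \<le> n" and k1: "1 \<le> k" and kn: "k \<le> n - 1"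
  shows "\<exists>(V::nat set) E. V \<noteq> {} \<and> is_full V E (star_V m) star_E (empty_V n) empty_E
     \<and> card V = n + max (k + nat \<lceil>real (n - 1) / real k\<rceil>) (2 * m - 3 - k)"
proof -
  define c where "c = nat \<lceil>real (n - 1) / real k\<rceil>"
  define t where "t = max (k + c) (2 * m - 3 - k)"
  have n1: "1 \<le> n - 1" using m2 mn by linarith
  have c1: "1 \<le> c" using ceil_pos_aux[OF n1 k1] c_def by simp
  have nc: "n - 1 \<le> k * c" using ceil_ge_aux[OF k1] c_def by simp
  have t1: "k + c \<le> t" and t2: "2 * m - 3 - k \<le> t" using t_def by auto
  define p where "p = t - k + 1"
  define b where "b = p div 2"
  define a where "a = p - b"
  define xA where "xA = min (a * k) (n - 1)"
  define xB where "xB = n - 1 + k - xA"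
  have p2: "2 \<le> p" using t1 c1 p_def by linarith
  have b1: "1 \<le> b" using p2 b_def by linarith
  have ab: "b \<le> a" "a + b = p" using b_def a_def by auto
  have a1: "1 \<le> a" using ab b1 by linarith
  have "1 * k \<le> a * k" using a1 by (rule mult_le_mono1)
  then have kxA: "k \<le> xA" using kn xA_def by simp
  have xAa: "xA \<le> a * k" using xA_def by simp
  have "xA \<le> n - 1" using xA_def by simp
  then have kxB: "k \<le> xB" using xB_def by linarith
  have pk: "n - 1 + k \<le> p * k"
  proof -
    have "c + 1 \<le> p" using t1 p_def by linarith
    then have "(c + 1) * k \<le> p * k" by (rule mult_right_mono) simp
    then show ?thesis using nc by (simp add: algebra_simps)
  qed
  have xBb: "xB \<le> b * k"
  proof (cases "a * k \<le> n - 1")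
    case True
    then have "xA = a * k" using xA_def by simp
    moreover have "p * k = a * k + b * k" using ab(2) by (metis add_mult_distrib)
    ultimately show ?thesis using pk xB_def by linarith
  next
    case False
    then have "xA = n - 1" using xA_def by simp
    then show ?thesis using b1 xB_def by simp
  qed
  have X: "xA + xB = n - 1 + k" using xA_def xB_def by simp
  have "t + k \<ge> 2 * m - 3" using t2 by linarith
  moreover have "2 * b + 1 \<ge> p" using b_def by linarith
  ultimately have mb: "m - 1 \<le> k + b" using p_def t1 m2 by presburger
  have ma: "m - 1 \<le> k + a" using mb ab by linarith
  have full: "is_full {0..<a + b + xA + xB} (cE a b k xA xB) (star_V m) star_E (empty_V n) empty_E"
    by (rule construction[OF a1 b1 k1 kxA xAa kxB xBb X mb ma m2]) (use m2 mn in linarith)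
  have card: "card {0..<a + b + xA + xB} = n + t"
    using ab X p_def t1 m2 mn by simp
  have ne: "{0..<a + b + xA + xB} \<noteq> {}" using a1 by auto
  show ?thesis using full card ne t_def c_def by blast
qed

theorem theorem4p4:
  fixes n m :: nat
  assumes "2 \<le> m" and "m \<le> n"
  shows "f_full (star_V m) star_E (empty_V n) empty_E =
    n + (LEAST x. \<exists>k::nat. k \<ge> 1 \<and>
           x = max (k + nat \<lceil>real (n - 1) / real k\<rceil>) (2 * m - 3 - k))"
proof -
  define v where "v k = max (k + nat \<lceil>real (n - 1) / real k\<rceil>) (2 * m - 3 - k)" for k :: nat
  define X where "X = (LEAST x. \<exists>k::nat. k \<ge> 1 \<and> x = v k)"
  have Xdef: "(LEAST x. \<exists>k::nat. k \<ge> 1 \<and>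
           x = max (k + nat \<lceil>real (n - 1) / real k\<rceil>) (2 * m - 3 - k)) = X"
    unfolding X_def v_def by simp
  have n1: "1 \<le> n - 1" using assms by linarith
  have "\<exists>k::nat. k \<ge> 1 \<and> X = v k" unfolding X_def
  proof (rule LeastI_ex)
    show "\<exists>x k. k \<ge> 1 \<and> x = v (k::nat)" by (rule exI[of _ "v 1"]) auto
  qed
  then obtain k0 where k0: "k0 \<ge> 1" "X = v k0" by blast
  have Xle: "k \<ge> 1 \<Longrightarrow> X \<le> v k" for k unfolding X_def by (rule Least_le) blast
  have k0n: "k0 \<le> n - 1"
  proof (rule ccontr)
    assume "\<not> k0 \<le> n - 1"
    then have "n \<le> k0" by simp
    have "1 \<le> nat \<lceil>real (n - 1) / real k0\<rceil>" using ceil_pos_aux[OF n1 k0(1)] .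
    then have "n + 1 \<le> v k0" unfolding v_def using \<open>n \<le> k0\<close> by simp
    moreover have "v (n - 1) \<le> n"
    proof -
      have "real (n - 1) / real (n - 1) = 1" using n1 by simp
      then have "nat \<lceil>real (n - 1) / real (n - 1)\<rceil> = 1" by simp
      then show ?thesis unfolding v_def using assms by simp
    qed
    ultimately show False using Xle[OF n1] k0(2) by linarith
  qed
  obtain V0 :: "nat set" and E0 where G0: "V0 \<noteq> {}" "is_full V0 E0 (star_V m) star_E (empty_V n) empty_E"
    "card V0 = n + v k0"
    using upper_bound[OF assms(1) assms(2) k0(1) k0n] unfolding v_def by blast
  define F where "F = f_full (star_V m) star_E (empty_V n) empty_E"
  have ex: "\<exists>N (V::nat set) E. V \<noteq> {} \<and> is_full V E (star_V m) star_E (empty_V n) empty_E \<and> card V = N"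
    using G0 by blast
  have cV0: "card V0 = n + X" using G0(3) k0(2) by simp
  have "F \<le> n + X" unfolding F_def f_full_def
  proof (rule Least_le)
    show "\<exists>(V::nat set) E. V \<noteq> {} \<and> is_full V E (star_V m) star_E (empty_V n) empty_E \<and> card V = n + X"
      using G0(1,2) cV0 by blast
  qed
  moreover have "n + X \<le> F"
  proof -
    have "\<exists>(V::nat set) E. V \<noteq> {} \<and> is_full V E (star_V m) star_E (empty_V n) empty_E \<and> card V = F"
      unfolding F_def f_full_def by (rule LeastI_ex) (rule ex)
    then obtain V1 :: "nat set" and E1 where G1: "V1 \<noteq> {}" "is_full V1 E1 (star_V m) star_E (empty_V n) empty_E"
      "card V1 = F" by blast
    have sg: "simple_graph V1 E1" using G1(2) unfolding is_full_def by blast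
    obtain k where k: "k \<ge> 1" "n + v k \<le> card V1"
      using lower_bound[OF sg G1(1) G1(2) assms(1)] unfolding v_def by blast
    then show ?thesis using Xle[OF k(1)] G1(3) by linarith
  qed
  ultimately show ?thesis using Xdef F_def by simp
qed


end
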